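(* Let $(X,\mu)$ be a probability space and let $f\in L^1(X,\mu)$ be real-valued with $\int f\,d\mu=0$ and $\int e^{-\alpha f}\,d\mu<\infty$ for all $\alpha>0$. Then for every integer $n\geq1$, \[ \int\big(e^{-f}-1\big)^{2n}\,d\mu\leq 2^{2n-2}\int\big(e^{-2nf}-1\big)\,d\mu . \] Moreover, if additionally $f\in L^4(X,\mu)$, then \[ \Big|\int e^{\mathrm{i} f}\,d\mu-e^{-\frac12\|f\|_{L^2}^2}\Big|\leq\frac{\|f\|_{L^3}^3}{6}+\frac{\|f\|_{L^2}^4}{8}. \] *)

theory Defs
  imports "HOL-Probability.Probability"
begin

end

theory Submission
  imports Defs
begin

lemma bin_aux: fixes s::real assumes "s \<ge> 0" "m \<ge> 2" shows "1 + real m * s + s^m \<le> (1+s)^m"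
  using assms(2)
proof (induction m rule: dec_induct)
  case base then show ?case by (simp add: power2_eq_square algebra_simps)
next
  case (step m)
  have "1 + real (Suc m) * s + s^Suc m \<le> (1 + real m * s + s^m) * (1+s)"
    using assms(1) by (simp add: algebra_simps)
  also have "\<dots> \<le> (1+s)^m * (1+s)" using step.IH assms(1) by (intro mult_right_mono) auto
  finally show ?case by (simp add: mult.commute)
qed

lemma exp_diff_le: fixes p q::real assumes "0 \<le> p" "p \<le> q" shows "exp (-p) - exp (-q) \<le> q - p"
proof -
  have "exp (-q) = exp (-p) * exp (-(q-p))" by (simp flip: exp_add)
  hence "exp (-p) - exp (-q) = exp (-p) * (1 - exp (-(q-p)))" by (simp add: algebra_simps)
  also have "\<dots> \<le> 1 * (q - p)"
  proof (rule mult_mono)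
    show "exp (-p) \<le> 1" using assms by simp
    show "1 - exp (-(q-p)) \<le> q - p" using exp_ge_add_one_self[of "-(q-p)"] by linarith
    show "0 \<le> 1 - exp (-(q-p))" using assms by simp
  qed simp
  finally show ?thesis by simp
qed

lemma pw: fixes x::real and n::nat assumes "n \<ge> 1"
  shows "(exp (-x) - 1)^(2*n) \<le> 2^(2*n-2) * (exp (-(2*real n)*x) - 1 + 2*real n*x)"
proof -
  have E: "exp (-(2*real n)*x) = exp (-x)^(2*n)"
    by (metis exp_of_nat_mult mult_minus_right mult.commute of_nat_mult of_nat_numeral mult_minus_left)
  have P: "(1::real) \<le> 2^(2*n-2)" by simp
  have key: "(exp (-x) - 1)^(2*n) \<le> exp (-(2*real n)*x) - 1 + 2*real n*x"
  proof (cases "x \<le> 0")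
    case True
    define s where "s = exp (-x) - 1"
    have s0: "s \<ge> -x" using exp_ge_add_one_self[of "-x"] by (simp add: s_def)
    have A: "1 + real (2*n) * s + s^(2*n) \<le> (1+s)^(2*n)" using True s0 assms by (intro bin_aux) auto
    have B: "real (2*n) * (-x) \<le> real (2*n) * s" using s0 by (intro mult_left_mono) auto
    have C: "exp (-x) = 1 + s" by (simp add: s_def)
    have D: "real (2*n) * (-x) = - (2*real n*x)" by simp
    have F: "s^(2*n) \<le> (1+s)^(2*n) - 1 + 2*real n*x" using A B D by linarith
    have G: "1 + s - 1 = s" by simp
    show ?thesis unfolding E C G by (rule F)
  next
    case False
    define y where "y = exp (-x)"
    have y1: "y < 1" "y > 0" using False by (auto simp: y_def)
    have "(y - 1)^(2*n) = (1-y)^(2*n)" by (simp only: power_mult power2_commute)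
    also have "\<dots> \<le> (1-y)^2" using y1 assms by (intro power_decreasing) auto
    also have "\<dots> \<le> exp (-2*x) - 1 + 2*x"
    proof -
      have "exp (-2*x) = y^2" by (simp add: y_def power2_eq_square flip: exp_add)
      moreover have "y \<ge> 1 - x" using exp_ge_add_one_self[of "-x"] by (simp add: y_def)
      ultimately show ?thesis by (simp add: power2_eq_square algebra_simps)
    qed
    also have "\<dots> \<le> exp (-(2*real n)*x) - 1 + 2*real n*x"
      using exp_diff_le[of "2*x" "2*real n*x"] False assms
      by (simp add: mult_right_mono)
    finally show ?thesis by (simp add: y_def)
  qed
  have nn: "0 \<le> exp (-(2*real n)*x) - 1 + 2*real n*x" using exp_ge_add_one_self[of "-(2*real n)*x"] by simp
  have "1 * (exp (-(2*real n)*x) - 1 + 2*real n*x) \<le> 2^(2*n-2) * (exp (-(2*real n)*x) - 1 + 2*real n*x)"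
    by (rule mult_right_mono[OF P nn])
  then have T: "exp (-(2*real n)*x) - 1 + 2*real n*x \<le> 2^(2*n-2) * (exp (-(2*real n)*x) - 1 + 2*real n*x)"
    by (simp only: mult_1)
  show ?thesis by (rule order_trans[OF key T])
qed

lemma pow_le: fixes y::real assumes "k \<le> 4" shows "\<bar>y\<bar>^k \<le> 1 + y^4"
proof (cases "\<bar>y\<bar> \<le> 1")
  case True
  then have "\<bar>y\<bar>^k \<le> 1" by (intro power_le_one) auto
  moreover have "0 \<le> y^4" by (simp add: zero_le_even_power)
  ultimately show ?thesis by linarith
next
  case False
  then have "\<bar>y\<bar>^k \<le> \<bar>y\<bar>^4" using assms by (intro power_increasing) auto
  also have "\<dots> = y^4" by (simp add: power_abs[symmetric] zero_le_even_power)
  finally show ?thesis by linarith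
qed

lemma exp_neg_quad: fixes s::real assumes "s \<ge> 0" shows "\<bar>exp (-s) - (1 - s)\<bar> \<le> s^2/2"
proof -
  have lo: "1 - s \<le> exp (-s)" using exp_ge_add_one_self[of "-s"] by linarith
  have q: "1 + s + s^2/2 \<le> exp s" using exp_lower_Taylor_quadratic[OF assms] .
  have e: "1 - s + s^2/2 = ((s-1)^2 + 1)/2" by (simp add: power2_eq_square algebra_simps)
  have "0 < ((s-1)^2 + 1)/2" by (intro divide_pos_pos add_nonneg_pos) auto
  then have pos: "0 < 1 - s + s^2/2" unfolding e .
  have "exp (-s) = 1 / exp s" by (simp add: exp_minus field_simps)
  also have "\<dots> \<le> 1 / (1 + s + s^2/2)" using q assms by (intro divide_left_mono mult_pos_pos add_pos_nonneg) auto
  also have "\<dots> \<le> 1 - s + s^2/2"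
  proof -
    have "0 \<le> s * (s * (s * s))" using assms by simp
    then have "1 \<le> (1 - s + s^2/2) * (1 + s + s^2/2)" by (simp add: algebra_simps power2_eq_square power4_eq_xxxx)
    then show ?thesis using assms by (simp add: divide_le_eq add_pos_nonneg)
  qed
  finally show ?thesis using lo by linarith
qed

lemma cis_approx: "cmod (cis x - (1 + \<i> * complex_of_real x - complex_of_real (x^2/2))) \<le> \<bar>x\<bar>^3/6"
proof -
  have "(\<Sum>k \<le> 2. (\<i> * complex_of_real x)^k / fact k) = 1 + \<i> * complex_of_real x - complex_of_real (x^2/2)"
    by (simp add: eval_nat_numeral power2_eq_square complex_eq_iff)
  moreover have "fact (Suc 2) = (6::real)" by (simp add: eval_nat_numeral)
  ultimately show ?thesis using iexp_approx1[of x 2] by (simp add: cis_conv_exp)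
qed

theorem lemma4p4:
  fixes M :: "'a measure" and f :: "'a \<Rightarrow> real"
  assumes "prob_space M"
    and "integrable M f"
    and "(\<integral>x. f x \<partial>M) = 0"
    and "\<And>\<alpha>::real. \<alpha> > 0 \<Longrightarrow> integrable M (\<lambda>x. exp (- \<alpha> * f x))"
  shows "(\<forall>n::nat. n \<ge> 1 \<longrightarrow>
            (\<integral>x. (exp (- f x) - 1) ^ (2*n) \<partial>M)
              \<le> 2 ^ (2*n - 2) * (\<integral>x. (exp (- (2 * real n) * f x) - 1) \<partial>M))
       \<and> (integrable M (\<lambda>x. (f x) ^ 4) \<longrightarrow>
            cmod ((\<integral>x. cis (f x) \<partial>M) - complex_of_real (exp (- (1/2) * (\<integral>x. (f x)^2 \<partial>M))))
              \<le> (\<integral>x. \<bar>f x\<bar> ^ 3 \<partial>M) / 6 + (\<integral>x. (f x)^2 \<partial>M) ^ 2 / 8)"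
proof (intro conjI allI impI)
  interpret P: prob_space M by (rule assms(1))
  have fm[measurable]: "f \<in> borel_measurable M" using assms(2) by (rule borel_measurable_integrable)
  {
    fix n :: nat assume n: "n \<ge> 1"
    define c where "c = (2::real)^(2*n-2)"
    have ie: "integrable M (\<lambda>x. exp (- (2 * real n) * f x) - 1)"
      using assms(4)[of "2 * real n"] n by (intro Bochner_Integration.integrable_diff) auto
    have iK: "integrable M (\<lambda>x. c * ((exp (- (2 * real n) * f x) - 1) + 2 * real n * f x))"
      using ie assms(2) by (intro integrable_mult_right Bochner_Integration.integrable_add) auto
    have "(\<integral>x. (exp (- f x) - 1) ^ (2*n) \<partial>M) \<le> (\<integral>x. c * ((exp (- (2 * real n) * f x) - 1) + 2 * real n * f x) \<partial>M)"
    proof (rule integral_mono'[OF iK])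
      fix x
      show "(exp (- f x) - 1) ^ (2*n) \<le> c * ((exp (- (2 * real n) * f x) - 1) + 2 * real n * f x)"
        using pw[OF n, of "f x"] by (simp add: c_def)
      have "0 \<le> exp (- (2 * real n) * f x) - 1 + 2 * real n * f x"
        using exp_ge_add_one_self[of "- (2 * real n) * f x"] by simp
      then show "0 \<le> c * ((exp (- (2 * real n) * f x) - 1) + 2 * real n * f x)"
        by (simp add: c_def)
    qed
    also have "\<dots> = c * ((\<integral>x. exp (- (2 * real n) * f x) - 1 \<partial>M) + 2 * real n * (\<integral>x. f x \<partial>M))"
      using ie assms(2) by (simp add: Bochner_Integration.integral_add)
    finally show "(\<integral>x. (exp (- f x) - 1) ^ (2*n) \<partial>M) \<le> 2 ^ (2*n - 2) * (\<integral>x. (exp (- (2 * real n) * f x) - 1) \<partial>M)"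
      using assms(3) by (simp add: c_def)
  }
  assume i4: "integrable M (\<lambda>x. (f x) ^ 4)"
  have i2: "integrable M (\<lambda>x. (f x) ^ 2)"
  proof (rule Bochner_Integration.integrable_bound[of _ "\<lambda>x. 1 + (f x)^4"])
    show "integrable M (\<lambda>x. 1 + (f x)^4)" using i4 by simp
    show "AE x in M. norm ((f x)^2) \<le> norm (1 + (f x)^4)"
      using pow_le[of 2] by (intro AE_I2) (simp add: power2_abs)
  qed simp
  have i3: "integrable M (\<lambda>x. \<bar>f x\<bar> ^ 3)"
  proof (rule Bochner_Integration.integrable_bound[of _ "\<lambda>x. 1 + (f x)^4"])
    show "integrable M (\<lambda>x. 1 + (f x)^4)" using i4 by simp
    show "AE x in M. norm (\<bar>f x\<bar>^3) \<le> norm (1 + (f x)^4)"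
      using pow_le[of 3] by (intro AE_I2) (simp add: power_abs)
  qed simp
  define \<sigma> where "\<sigma> = (\<integral>x. (f x)^2 \<partial>M)"
  have s0: "\<sigma> \<ge> 0" unfolding \<sigma>_def by simp
  have ic: "integrable M (\<lambda>x. cis (f x))"
    unfolding cis_conv_exp using P.integrable_iexp[of "\<lambda>x. complex_of_real (f x)"] by simp
  have ir1: "integrable M (\<lambda>x. complex_of_real (f x))" using assms(2) by (simp add: complex_of_real_integrable_eq)
  have ir2: "integrable M (\<lambda>x. complex_of_real ((f x)^2/2))" using i2 by (intro complex_of_real_integrable_eq[THEN iffD2] integrable_divide)
  define g where "g x = cis (f x) - (1 + \<i> * complex_of_real (f x) - complex_of_real ((f x)^2/2))" for x
  have ig: "integrable M g" unfolding g_def using ic ir1 ir2 by (auto simp del: of_real_power of_real_divide)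
  have intg: "(\<integral>x. g x \<partial>M) = (\<integral>x. cis (f x) \<partial>M) - complex_of_real (1 - \<sigma>/2)"
    unfolding g_def using ic ir1 ir2 assms(3)
    by (simp add: \<sigma>_def Bochner_Integration.integral_diff Bochner_Integration.integral_add P.prob_space del: of_real_power of_real_divide)
  have "cmod (\<integral>x. g x \<partial>M) \<le> (\<integral>x. norm (g x) \<partial>M)" by (rule integral_norm_bound)
  also have "\<dots> \<le> (\<integral>x. \<bar>f x\<bar> ^ 3 / 6 \<partial>M)"
  proof (rule integral_mono)
    show "integrable M (\<lambda>x. norm (g x))" using ig by (rule integrable_norm)
    show "integrable M (\<lambda>x. \<bar>f x\<bar> ^ 3 / 6)" using i3 by simp
    fix x show "norm (g x) \<le> \<bar>f x\<bar> ^ 3 / 6" unfolding g_def by (rule cis_approx)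
  qed
  finally have A: "cmod (\<integral>x. g x \<partial>M) \<le> (\<integral>x. \<bar>f x\<bar> ^ 3 \<partial>M) / 6" by simp
  have B: "\<bar>exp (-(\<sigma>/2)) - (1 - \<sigma>/2)\<bar> \<le> \<sigma>^2/8"
    using exp_neg_quad[of "\<sigma>/2"] s0 by (simp add: power_divide)
  have eq: "(\<integral>x. cis (f x) \<partial>M) - complex_of_real (exp (- (1/2) * \<sigma>))
      = (\<integral>x. g x \<partial>M) - complex_of_real (exp (-(\<sigma>/2)) - (1 - \<sigma>/2))"
    by (simp add: intg)
  have "cmod ((\<integral>x. cis (f x) \<partial>M) - complex_of_real (exp (- (1/2) * \<sigma>)))
     \<le> cmod (\<integral>x. g x \<partial>M) + \<bar>exp (-(\<sigma>/2)) - (1 - \<sigma>/2)\<bar>"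
    unfolding eq by (metis norm_triangle_ineq4 norm_of_real)
  then show "cmod ((\<integral>x. cis (f x) \<partial>M) - complex_of_real (exp (- (1/2) * (\<integral>x. (f x)^2 \<partial>M))))
              \<le> (\<integral>x. \<bar>f x\<bar> ^ 3 \<partial>M) / 6 + (\<integral>x. (f x)^2 \<partial>M) ^ 2 / 8"
    using A B unfolding \<sigma>_def by linarith
qed

end
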